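(* Let $(s_i)_{i\in\mathbb{Z}}$ and $(t_j)_{j\in\mathbb{Z}}$ be strictly increasing bi-infinite real sequences, unbounded above and below, and let $F:\mathbb{R}^2\to\mathbb{R}^d$ have the BMSDD property with constant $L$ in each rectangle $[s_i,s_{i+1}]\times[t_j,t_{j+1}]$, $i,j\in\mathbb{Z}$. Then $F$ has the BMSDD property with constant $L$ in $\mathbb{R}^2$.
   Context: For $\sigma_1\ne\sigma_2$, $\tau_1\ne\tau_2$, $[\sigma_1,\sigma_2;\tau_1,\tau_2]F=\frac{F(\sigma_1,\tau_1)+F(\sigma_2,\tau_2)-F(\sigma_2,\tau_1)-F(\sigma_1,\tau_2)}{(\sigma_1-\sigma_2)(\tau_1-\tau_2)}$. $F$ has the BMSDD property with constant $L$ in $\Omega\subset\mathbb{R}^2$ if $\|[\sigma_1,\sigma_2;\tau_1,\tau_2]F\|_\infty\le L$ for all $\sigma_1\ne\sigma_2$, $\tau_1\ne\tau_2$ with $(\sigma_i,\tau_j)\in\Omega$ for all $i,j\in\{1,2\}$. *)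

theory Defs
  imports "HOL-Analysis.Analysis"
begin

definition mdd :: "(real \<times> real \<Rightarrow> real ^ 'd) \<Rightarrow> real \<Rightarrow> real \<Rightarrow> real \<Rightarrow> real \<Rightarrow> real ^ 'd" where
  "mdd F \<sigma>1 \<sigma>2 \<tau>1 \<tau>2 =
     (F (\<sigma>1, \<tau>1) + F (\<sigma>2, \<tau>2) - F (\<sigma>2, \<tau>1) - F (\<sigma>1, \<tau>2)) /\<^sub>R ((\<sigma>1 - \<sigma>2) * (\<tau>1 - \<tau>2))"

definition bmsdd :: "(real \<times> real \<Rightarrow> real ^ 'd) \<Rightarrow> real \<Rightarrow> (real \<times> real) set \<Rightarrow> bool" where
  "bmsdd F L \<Omega> \<longleftrightarrow>
     (\<forall>\<sigma>1 \<sigma>2 \<tau>1 \<tau>2. \<sigma>1 \<noteq> \<sigma>2 \<and> \<tau>1 \<noteq> \<tau>2 \<and>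
        (\<sigma>1, \<tau>1) \<in> \<Omega> \<and> (\<sigma>1, \<tau>2) \<in> \<Omega> \<and> (\<sigma>2, \<tau>1) \<in> \<Omega> \<and> (\<sigma>2, \<tau>2) \<in> \<Omega> \<longrightarrow>
        infnorm (mdd F \<sigma>1 \<sigma>2 \<tau>1 \<tau>2) \<le> L)"

end

theory Submission
  imports Defs
begin

definition NN :: "(real \<times> real \<Rightarrow> real ^ 'd) \<Rightarrow> real \<Rightarrow> real \<Rightarrow> real \<Rightarrow> real \<Rightarrow> real ^ 'd" where
  "NN F a b c d = F (a, c) + F (b, d) - F (b, c) - F (a, d)"

lemma cover1:
  fixes s :: "int \<Rightarrow> real"
  assumes sm: "strict_mono s" and up: "\<forall>x. \<exists>i. s i > x" and lo: "\<forall>x. \<exists>i. s i < x"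
    and tr: "\<And>a b c. a \<le> b \<Longrightarrow> b \<le> c \<Longrightarrow> Q a b \<Longrightarrow> Q b c \<Longrightarrow> Q a c"
    and cell: "\<And>i a b. s i \<le> a \<Longrightarrow> a \<le> b \<Longrightarrow> b \<le> s (i + 1) \<Longrightarrow> Q a b"
    and ab: "a \<le> b"
  shows "Q a b"
proof -
  have mono: "\<And>i j. i \<le> j \<Longrightarrow> s i \<le> s j" using sm by (simp add: strict_mono_less_eq)
  have ind: "\<And>i a b. s i \<le> a \<Longrightarrow> a \<le> b \<Longrightarrow> b \<le> s (i + 1 + int n) \<Longrightarrow> Q a b" for n
  proof (induction n)
    case 0 then show ?case using cell by simp
  next
    case (Suc n)
    show ?case
    proof (cases "b \<le> s (i + 1 + int n)")
      case True then show ?thesis using Suc by blast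
    next
      case False
      have b2: "b \<le> s (i + 1 + int n + 1)" using Suc.prems by (simp add: add.assoc)
      show ?thesis
      proof (cases "a \<ge> s (i + 1 + int n)")
        case True show ?thesis by (rule cell[OF True Suc.prems(2) b2])
      next
        case F2: False
        have "Q a (s (i + 1 + int n))" using Suc.IH[of i a] Suc.prems F2 by simp
        moreover have "Q (s (i + 1 + int n)) b" using cell[of "i + 1 + int n"] b2 False by simp
        ultimately show ?thesis using tr[of a "s (i + 1 + int n)" b] F2 False by simp
      qed
    qed
  qed
  obtain i where i: "s i < a" using lo by blast
  obtain j where j: "s j > b" using up by blast
  have "i < j"
  proof (rule ccontr)
    assume "\<not> i < j" then have "s j \<le> s i" using mono by simp
    then show False using i j ab by simp
  qed
  then have "j = i + 1 + int (nat (j - i - 1))" by simp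
  then have "b \<le> s (i + 1 + int (nat (j - i - 1)))" using j by simp
  then show ?thesis using ind[of i a b "nat (j - i - 1)"] i ab by simp
qed

lemma mdd_NN: "mdd F a b c d = NN F a b c d /\<^sub>R ((a - b) * (c - d))"
  by (simp add: mdd_def NN_def)

lemma NN_split1: "NN F a c x y = NN F a b x y + NN F b c x y"
  by (simp add: NN_def algebra_simps)

lemma NN_split2: "NN F a b x z = NN F a b x y + NN F a b y z"
  by (simp add: NN_def algebra_simps)

lemma NN_swap1: "NN F b a x y = - NN F a b x y"
  by (simp add: NN_def algebra_simps)

lemma NN_swap2: "NN F a b y x = - NN F a b x y"
  by (simp add: NN_def algebra_simps)

theorem lemma5:
  fixes s t :: "int \<Rightarrow> real" and F :: "real \<times> real \<Rightarrow> real ^ 'd" and L :: real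
  assumes "strict_mono s" and "strict_mono t"
    and "\<forall>x. \<exists>i. s i > x" and "\<forall>x. \<exists>i. s i < x"
    and "\<forall>x. \<exists>j. t j > x" and "\<forall>x. \<exists>j. t j < x"
    and "\<forall>i j. bmsdd F L ({s i .. s (i + 1)} \<times> {t j .. t (j + 1)})"
  shows "bmsdd F L UNIV"
proof -
  define B where "B a b c d \<longleftrightarrow> infnorm (NN F a b c d) \<le> L * (b - a) * (d - c)" for a b c d
  have base: "B a b c d" if "s i \<le> a" "a \<le> b" "b \<le> s (i+1)" "t j \<le> c" "c \<le> d" "d \<le> t (j+1)" for i j a b c d
  proof (cases "a = b \<or> c = d")
    case True then show ?thesis by (auto simp: B_def NN_def infnorm_0)
  next
    case False
    have H: "bmsdd F L ({s i .. s (i + 1)} \<times> {t j .. t (j + 1)})" using assms(7) by blast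
    have "infnorm (mdd F a b c d) \<le> L"
      using H[unfolded bmsdd_def, rule_format, of a b c d] False that by auto
    then have "infnorm (NN F a b c d) / \<bar>(a - b) * (c - d)\<bar> \<le> L"
      by (simp add: mdd_NN infnorm_mul divide_inverse_commute abs_inverse abs_mult inverse_mult_distrib)
    moreover have q: "(a - b) * (c - d) = (b - a) * (d - c)" by (simp add: algebra_simps)
    moreover have qp: "(b - a) * (d - c) > 0" using False that by simp
    ultimately have "infnorm (NN F a b c d) / ((b - a) * (d - c)) \<le> L" by simp
    then have "infnorm (NN F a b c d) \<le> L * ((b - a) * (d - c))"
      using qp by (simp add: pos_divide_le_eq)
    then show ?thesis unfolding B_def by (simp add: mult.assoc)
  qed
  have tr1: "B a c x y" if "a \<le> b" "b \<le> c" "B a b x y" "B b c x y" for a b c x y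
  proof -
    have "infnorm (NN F a c x y) \<le> infnorm (NN F a b x y) + infnorm (NN F b c x y)"
      by (subst NN_split1[of F a c x y b]) (rule infnorm_triangle)
    also have "\<dots> \<le> L * (c - a) * (y - x)" using that unfolding B_def by (simp add: algebra_simps)
    finally show ?thesis unfolding B_def .
  qed
  have tr2: "B a b x z" if "x \<le> y" "y \<le> z" "B a b x y" "B a b y z" for a b x y z
  proof -
    have "infnorm (NN F a b x z) \<le> infnorm (NN F a b x y) + infnorm (NN F a b y z)"
      by (subst NN_split2[of F a b x z y]) (rule infnorm_triangle)
    also have "\<dots> \<le> L * (b - a) * (z - x)" using that unfolding B_def by (simp add: algebra_simps)
    finally show ?thesis unfolding B_def .
  qed
  have step1: "\<forall>j c d. t j \<le> c \<longrightarrow> c \<le> d \<longrightarrow> d \<le> t (j+1) \<longrightarrow> B a b c d" if "a \<le> b" for a b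
  proof (rule cover1[where Q = "\<lambda>a b. \<forall>j c d. t j \<le> c \<longrightarrow> c \<le> d \<longrightarrow> d \<le> t (j+1) \<longrightarrow> B a b c d", OF assms(1,3,4) _ _ that])
    fix a b c assume h1: "a \<le> b" "b \<le> c"
      and h2: "\<forall>j x y. t j \<le> x \<longrightarrow> x \<le> y \<longrightarrow> y \<le> t (j+1) \<longrightarrow> B a b x y"
      and h3: "\<forall>j x y. t j \<le> x \<longrightarrow> x \<le> y \<longrightarrow> y \<le> t (j+1) \<longrightarrow> B b c x y"
    show "\<forall>j x y. t j \<le> x \<longrightarrow> x \<le> y \<longrightarrow> y \<le> t (j+1) \<longrightarrow> B a c x y"
    proof (intro allI impI)
      fix j x y assume "t j \<le> x" "x \<le> y" "y \<le> t (j+1)"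
      then show "B a c x y" using tr1[OF h1] h2 h3 by blast
    qed
  next
    fix i a b assume "s i \<le> a" "a \<le> b" "b \<le> s (i + 1)"
    then show "\<forall>j x y. t j \<le> x \<longrightarrow> x \<le> y \<longrightarrow> y \<le> t (j+1) \<longrightarrow> B a b x y"
      using base[of i a b] by blast
  qed
  have step2: "B a b c d" if "a \<le> b" "c \<le> d" for a b c d
  proof (rule cover1[where Q = "\<lambda>c d. B a b c d", OF assms(2,5,6) _ _ that(2)])
    fix x y z assume "x \<le> y" "y \<le> z" "B a b x y" "B a b y z"
    then show "B a b x z" by (rule tr2)
  next
    fix j x y assume "t j \<le> x" "x \<le> y" "y \<le> t (j + 1)"
    then show "B a b x y" using step1[OF that(1)] by blast
  qed
  have gen: "infnorm (NN F a b c d) \<le> L * \<bar>b - a\<bar> * \<bar>d - c\<bar>" for a b c d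
  proof -
    have "B (min a b) (max a b) (min c d) (max c d)" by (rule step2) auto
    moreover have "infnorm (NN F (min a b) (max a b) (min c d) (max c d)) = infnorm (NN F a b c d)"
    proof -
      have e1: "infnorm (NN F b a x y) = infnorm (NN F a b x y)" for a b x y
        using NN_swap1[of F b a x y] infnorm_neg by metis
      have e2: "infnorm (NN F a b y x) = infnorm (NN F a b x y)" for a b x y
        using NN_swap2[of F a b y x] infnorm_neg by metis
      show ?thesis
      proof (cases "a \<le> b"; cases "c \<le> d")
        assume "a \<le> b" "c \<le> d" then show ?thesis by simp
      next
        assume "a \<le> b" "\<not> c \<le> d" then show ?thesis using e2[of a b d c] by simp
      next
        assume "\<not> a \<le> b" "c \<le> d" then show ?thesis using e1[of b a c d] by simp
      next
        assume "\<not> a \<le> b" "\<not> c \<le> d" then show ?thesis using e1[of b a d c] e2[of a b d c] by simp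
      qed
    qed
    moreover have "(max a b - min a b) = \<bar>b - a\<bar>" "(max c d - min c d) = \<bar>d - c\<bar>" by auto
    ultimately show ?thesis unfolding B_def by simp
  qed
  show ?thesis unfolding bmsdd_def
  proof (intro allI impI)
    fix a b c d :: real assume h: "a \<noteq> b \<and> c \<noteq> d \<and> (a, c) \<in> UNIV \<and> (a, d) \<in> UNIV \<and> (b, c) \<in> UNIV \<and> (b, d) \<in> UNIV"
    have pos: "\<bar>(a - b) * (c - d)\<bar> > 0" using h by simp
    have "infnorm (mdd F a b c d) = infnorm (NN F a b c d) / \<bar>(a - b) * (c - d)\<bar>"
      by (simp add: mdd_NN infnorm_mul divide_inverse_commute abs_inverse abs_mult inverse_mult_distrib)
    also have "\<dots> \<le> L" using gen[of a b c d] pos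
      by (simp add: pos_divide_le_eq abs_mult abs_minus_commute mult.assoc)
    finally show "infnorm (mdd F a b c d) \<le> L" .
  qed
qed

end
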